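(* Let $n\ge3$. For $i\ge -1$ let $\mathfrak{M}_i$ be the free $\mathbb{Z}$-module spanned by $\mathcal{N}_i$. Then each $\mathfrak{M}_i$ is a homogeneous subring of $\mathfrak{L}(n)$, and for every $i\ge 0$, \[\mathfrak{M}_i=N_{\mathfrak{L}(n)}(\mathfrak{M}_{i-1})=\mathfrak{N}_i.\]
   Context: Fix an integer $n\ge 3$. A partition is a sequence $\Lambda=(\lambda_j)_{j\ge1}$ of non-negative integers with finite support; $\mathrm{wt}(\Lambda)=\sum_j j\lambda_j$; $\mathrm{Part}(k)$ is the set of partitions with $\lambda_j=0$ for $j>k$. Write $x^\Lambda=\prod_j x_j^{\lambda_j}$, $\deg(x^\Lambda)=\sum_j\lambda_j$, and let $\partial_k$ be the partial derivative with respect to $x_k$. $\mathfrak{L}(n)$ is the free $\mathbb{Z}$-module with basis $\mathcal{B}=\{x^\Lambda\partial_k : 1\le k\le n,\ \Lambda\in\mathrm{Part}(k-1)\}$, a Lie ring with bracket defined on basis elements by $[x^\Lambda\partial_k,x^\Theta\partial_j]=\partial_j(x^\Lambda)x^\Theta\partial_k$ if $j<k$, $-x^\Lambda\partial_k(x^\Theta)\partial_j$ if $j>k$, $0$ if $j=k$, extended bilinearly. A Lie subring is homogeneous if it is the $\mathbb{Z}$-span of a subset of $\mathcal{B}$. For an integer $i\ge-1$, let $r_i\in\{1,\dots,n-1\}$ with $i\equiv r_i\pmod{n-1}$ and $h_i=\lfloor (i-1)/(n-1)\rfloor+1$ (so $i=(h_i-1)(n-1)+r_i$). For a basis element define $\mathrm{WD}(x^\Lambda\partial_k)=\mathrm{wt}(\Lambda)-\deg(x^\Lambda)+n-k$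 and $\mathrm{lev}_i(x^\Lambda\partial_k)=h_i\,\mathrm{WD}(x^\Lambda\partial_k)+\deg(x^\Lambda)-1$. For $i\ge -1$, $\mathcal{N}_i=\{b\in\mathcal{B} : \mathrm{lev}_j(b)\le j \text{ for some integer } j \text{ with } -1\le j\le i\}$. The idealizer of a subring $\mathfrak{M}$ is $N_{\mathfrak{L}(n)}(\mathfrak{M})=\{y\in\mathfrak{L}(n): [y,m]\in\mathfrak{M}\ \forall m\in\mathfrak{M}\}$. Define $\mathfrak{N}_{-1}=\mathbb{Z}\partial_1+\dots+\mathbb{Z}\partial_n$ and $\mathfrak{N}_i=N_{\mathfrak{L}(n)}(\mathfrak{N}_{i-1})$ for $i\ge0$. *)

theory Defs
  imports Main
begin

text \<open>Partitions are sequences indexed from 1 (index 0 is forced to be 0).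
  A basis element x^Lambda d_k is the pair (Lambda, k).
  Elements of L(n) are finitely supported integer-valued functions on the basis.\<close>

type_synonym part = "nat \<Rightarrow> nat"
type_synonym bas = "part \<times> nat"
type_synonym elt = "bas \<Rightarrow> int"

definition Part :: "nat \<Rightarrow> part set" where
  "Part k = {L. \<forall>j. (j = 0 \<or> j > k) \<longrightarrow> L j = 0}"

definition wt :: "part \<Rightarrow> nat" where
  "wt L = (\<Sum>j\<in>{j. L j \<noteq> 0}. j * L j)"

definition pdeg :: "part \<Rightarrow> nat" where
  "pdeg L = (\<Sum>j\<in>{j. L j \<noteq> 0}. L j)"

definition Bas :: "nat \<Rightarrow> bas set" where
  "Bas n = {(L, k). 1 \<le> k \<and> k \<le> n \<and> L \<in> Part (k - 1)}"

definition supp :: "elt \<Rightarrow> bas set" where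
  "supp f = {b. f b \<noteq> 0}"

definition Lring :: "nat \<Rightarrow> elt set" where
  "Lring n = {f. finite (supp f) \<and> supp f \<subseteq> Bas n}"

definition brb :: "bas \<Rightarrow> bas \<Rightarrow> int \<times> bas" where
  "brb b c = (case b of (L, k) \<Rightarrow> case c of (T, j) \<Rightarrow>
     if j < k then (int (L j), ((\<lambda>i. L i + T i)(j := L j - 1 + T j), k))
     else if k < j then (- int (T k), ((\<lambda>i. L i + T i)(k := L k + T k - 1), j))
     else (0, (L, k)))"

definition br :: "elt \<Rightarrow> elt \<Rightarrow> elt" where
  "br y z = (\<lambda>d. \<Sum>(b, c)\<in>supp y \<times> supp z.
      (if snd (brb b c) = d then y b * z c * fst (brb b c) else 0))"

definition span :: "nat \<Rightarrow> bas set \<Rightarrow> elt set" where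
  "span n S = {f \<in> Lring n. supp f \<subseteq> S}"

definition lie_subring :: "nat \<Rightarrow> elt set \<Rightarrow> bool" where
  "lie_subring n M \<longleftrightarrow> M \<subseteq> Lring n \<and> (\<lambda>_. 0) \<in> M \<and>
     (\<forall>x\<in>M. \<forall>y\<in>M. (\<lambda>b. x b + y b) \<in> M \<and> (\<lambda>b. - x b) \<in> M \<and> br x y \<in> M)"

definition homogeneous_subring :: "nat \<Rightarrow> elt set \<Rightarrow> bool" where
  "homogeneous_subring n M \<longleftrightarrow> lie_subring n M \<and> (\<exists>S \<subseteq> Bas n. M = span n S)"

definition idealizer :: "nat \<Rightarrow> elt set \<Rightarrow> elt set" where
  "idealizer n M = {y \<in> Lring n. \<forall>m\<in>M. br y m \<in> M}"

definition WD :: "nat \<Rightarrow> bas \<Rightarrow> int" where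
  "WD n b = int (wt (fst b)) - int (pdeg (fst b)) + int n - int (snd b)"

definition hh :: "nat \<Rightarrow> int \<Rightarrow> int" where
  "hh n i = (i - 1) div (int n - 1) + 1"

definition lev :: "nat \<Rightarrow> int \<Rightarrow> bas \<Rightarrow> int" where
  "lev n i b = hh n i * WD n b + int (pdeg (fst b)) - 1"

definition Ncal :: "nat \<Rightarrow> int \<Rightarrow> bas set" where
  "Ncal n i = {b \<in> Bas n. \<exists>j::int. -1 \<le> j \<and> j \<le> i \<and> lev n j b \<le> j}"

definition Mfrak :: "nat \<Rightarrow> int \<Rightarrow> elt set" where
  "Mfrak n i = span n (Ncal n i)"

fun Nrec :: "nat \<Rightarrow> nat \<Rightarrow> elt set" where
  "Nrec n 0 = span n {(\<lambda>_. 0, k) | k. 1 \<le> k \<and> k \<le> n}"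
| "Nrec n (Suc m) = idealizer n (Nrec n m)"

text \<open>Nfrak n i for i >= -1, with Nfrak n (-1) = Z d_1 + ... + Z d_n.\<close>
definition Nfrak :: "nat \<Rightarrow> int \<Rightarrow> elt set" where
  "Nfrak n i = Nrec n (nat (i + 1))"

end

theory Submission
  imports Defs
begin

definition PP :: "nat \<Rightarrow> int \<Rightarrow> int \<Rightarrow> int \<Rightarrow> bool" where
  "PP n i W D \<longleftrightarrow> (\<exists>j. -1 \<le> j \<and> j \<le> i \<and> hh n j * W + D - 1 \<le> j)"



lemma wt_sum: fixes K :: nat assumes "\<forall>t>K. L t = 0" shows "wt L = (\<Sum>t\<le>K. t * L t)"
  unfolding wt_def
proof (rule sum.mono_neutral_left)
  show "{j. L j \<noteq> 0} \<subseteq> {..K}"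
  proof
    fix j assume "j \<in> {j. L j \<noteq> 0}"
    hence "L j \<noteq> 0" by simp
    hence "\<not> j > K" using assms by auto
    thus "j \<in> {..K}" by simp
  qed
qed auto

lemma pdeg_sum: fixes K :: nat assumes "\<forall>t>K. L t = 0" shows "pdeg L = (\<Sum>t\<le>K. L t)"
  unfolding pdeg_def
proof (rule sum.mono_neutral_left)
  show "{j. L j \<noteq> 0} \<subseteq> {..K}"
  proof
    fix j assume "j \<in> {j. L j \<noteq> 0}"
    hence "L j \<noteq> 0" by simp
    hence "\<not> j > K" using assms by auto
    thus "j \<in> {..K}" by simp
  qed
qed auto

lemma Bas_iff: "(L, k) \<in> Bas n \<longleftrightarrow> 1 \<le> k \<and> k \<le> n \<and> L 0 = 0 \<and> (\<forall>t. t \<ge> k \<longrightarrow> L t = 0)"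
  unfolding Bas_def Part_def by auto

lemma comb:
  fixes K :: nat assumes A: "\<forall>t>K. A t = 0" and B: "\<forall>t>K. B t = 0" and s: "s \<le> K" and AB: "A s + B s \<ge> 1"
  defines "R \<equiv> (\<lambda>i. A i + B i)(s := A s + B s - 1)"
  shows "\<forall>t>K. R t = 0" "wt R + s = wt A + wt B" "pdeg R + 1 = pdeg A + pdeg B"
proof -
  show R: "\<forall>t>K. R t = 0" using A B s unfolding R_def by auto
  have pt: "\<And>t. A t + B t = R t + (if t = s then 1 else 0)" unfolding R_def using AB by auto
  have "wt A + wt B = (\<Sum>t\<le>K. t * (A t + B t))"
    using A B by (simp add: wt_sum[of K] sum.distrib algebra_simps)
  also have "\<dots> = (\<Sum>t\<le>K. t * R t + (if t = s then s else 0))"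
    by (intro sum.cong refl) (simp add: pt algebra_simps)
  also have "\<dots> = wt R + s" using R s by (simp add: sum.distrib wt_sum[of K])
  finally show "wt R + s = wt A + wt B" by simp
  have "pdeg A + pdeg B = (\<Sum>t\<le>K. (A t + B t))"
    using A B by (simp add: pdeg_sum[of K] sum.distrib algebra_simps)
  also have "\<dots> = (\<Sum>t\<le>K. R t + (if t = s then 1 else 0))"
    by (intro sum.cong refl) (simp add: pt)
  also have "\<dots> = pdeg R + 1" using R s by (simp add: sum.distrib pdeg_sum[of K])
  finally show "pdeg R + 1 = pdeg A + pdeg B" by simp
qed

definition md :: "bas \<Rightarrow> nat \<Rightarrow> int" where
  "md b = (\<lambda>t. int (fst b t) - (if t = snd b then 1 else 0))"

lemma md_inj: assumes "b \<in> Bas n" "b' \<in> Bas n" "md b = md b'" shows "b = b'"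
proof -
  obtain L k where b: "b = (L, k)" by (cases b)
  obtain L' k' where b': "b' = (L', k')" by (cases b')
  have Lk: "L k = 0" "L' k' = 0" using assms b b' by (auto simp: Bas_iff)
  have "md b k = md b' k" using assms by simp
  hence "k = k'" using Lk unfolding b b' md_def by (auto split: if_splits)
  moreover have "\<And>t. md b t = md b' t" using assms by simp
  hence "\<And>t. L t = L' t" using \<open>k = k'\<close> unfolding b b' md_def by (simp split: if_splits)
  ultimately show ?thesis using b b' by auto
qed

lemma wt_ge_pdeg: assumes "(L, k) \<in> Bas n" shows "pdeg L \<le> wt L" "wt L \<le> (k - 1) * pdeg L"
proof -
  have z: "\<forall>t>n. L t = 0" "L 0 = 0" "\<forall>t\<ge>k. L t = 0" "k \<le> n" using assms by (auto simp: Bas_iff)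
  have "(\<Sum>t\<le>n. L t) \<le> (\<Sum>t\<le>n. t * L t)"
  proof (rule sum_mono)
    fix t show "L t \<le> t * L t" using z by (cases t) auto
  qed
  thus "pdeg L \<le> wt L" using z by (simp add: wt_sum[of n] pdeg_sum[of n])
  have "(\<Sum>t\<le>n. t * L t) \<le> (\<Sum>t\<le>n. (k - 1) * L t)"
  proof (rule sum_mono)
    fix t show "t * L t \<le> (k - 1) * L t" using z by (cases "t \<ge> k") auto
  qed
  thus "wt L \<le> (k - 1) * pdeg L" using z by (simp add: wt_sum[of n] pdeg_sum[of n] sum_distrib_left)
qed

lemma WD_nonneg: "b \<in> Bas n \<Longrightarrow> 0 \<le> WD n b"
  using wt_ge_pdeg[of "fst b" "snd b" n] unfolding WD_def by (cases b) (auto simp: Bas_iff)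

lemma WD_small: assumes "b \<in> Bas n" "pdeg (fst b) \<le> 1"
  shows "WD n b \<le> int n - 1" "pdeg (fst b) = 1 \<Longrightarrow> WD n b \<le> int n - 2"
proof -
  obtain L k where b: "b = (L, k)" by (cases b)
  have w: "wt L \<le> (k - 1) * pdeg L" "1 \<le> k" "k \<le> n" using wt_ge_pdeg[of L k n] assms b by (auto simp: Bas_iff)
  show "WD n b \<le> int n - 1"
  proof (cases "pdeg L = 0")
    case True thus ?thesis using w b unfolding WD_def by simp
  next
    case False hence "pdeg L = 1" using assms b by simp
    thus ?thesis using w b unfolding WD_def by simp
  qed
  assume "pdeg (fst b) = 1"
  thus "WD n b \<le> int n - 2" using w b unfolding WD_def by simp
qed

lemma WD_zero: assumes "(L, k) \<in> Bas n" "WD n (L, k) = 0"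
  shows "k = n" "\<And>t. t \<noteq> 1 \<Longrightarrow> L t = 0"
proof -
  have w: "pdeg L \<le> wt L" "k \<le> n" using wt_ge_pdeg[of L k n] assms by (auto simp: Bas_iff)
  hence e: "wt L = pdeg L" "k = n" using assms(2) unfolding WD_def by auto
  thus "k = n" by simp
  have z: "\<forall>t>n. L t = 0" "L 0 = 0" using assms by (auto simp: Bas_iff)
  fix t :: nat assume t: "t \<noteq> 1"
  show "L t = 0"
  proof (rule ccontr)
    assume nz: "L t \<noteq> 0"
    have tt: "2 \<le> t" "t \<le> n"
    proof -
      show "t \<le> n"
      proof (rule ccontr)
        assume "\<not> t \<le> n" hence "t > n" by simp
        thus False using nz z(1) by simp
      qed
      have "t \<noteq> 0"
      proof
        assume "t = 0" thus False using nz z(2) by simp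
      qed
      thus "2 \<le> t" using t by arith
    qed
    have "(\<Sum>t\<le>n. L t) < (\<Sum>t\<le>n. t * L t)"
    proof (rule sum_strict_mono_ex1)
      show "\<forall>x\<in>{..n}. L x \<le> x * L x"
      proof
        fix x show "L x \<le> x * L x" using z by (cases x) auto
      qed
      have "2 * L t \<le> t * L t" using tt by (intro mult_right_mono) auto
      hence "L t < t * L t" using nz by linarith
      thus "\<exists>a\<in>{..n}. L a < a * L a" using tt by blast
    qed simp
    thus False using e z by (simp add: wt_sum[of n] pdeg_sum[of n])
  qed
qed


lemma brb_lt: "j < k \<Longrightarrow> brb (L,k) (T,j) = (int (L j), ((\<lambda>i. L i + T i)(j := L j - 1 + T j), k))"
  by (simp add: brb_def)
lemma brb_gt: "k < j \<Longrightarrow> brb (L,k) (T,j) = (- int (T k), ((\<lambda>i. L i + T i)(k := L k + T k - 1), j))"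
  by (simp add: brb_def)
lemma brb_eq: "brb (L,k) (T,k) = (0, (L,k))"
  by (simp add: brb_def)

lemma brb_gen:
  assumes A: "(A, a) \<in> Bas n" and B: "(B, s) \<in> Bas n" and sa: "s < a" and ne: "A s + B s \<ge> 1"
  defines "R \<equiv> (\<lambda>i. A i + B i)(s := A s + B s - 1)"
  shows "(R, a) \<in> Bas n" "WD n (R, a) = WD n (A, a) + WD n (B, s) - (int n - 1)"
    "int (pdeg R) = int (pdeg A) + int (pdeg B) - 1"
    "md (R, a) = (\<lambda>t. md (A, a) t + md (B, s) t)"
proof -
  have Ai: "1 \<le> a" "a \<le> n" "A 0 = 0" "\<forall>t\<ge>a. A t = 0" using A by (auto simp: Bas_iff)
  have Bi: "1 \<le> s" "s \<le> n" "B 0 = 0" "\<forall>t\<ge>s. B t = 0" using B by (auto simp: Bas_iff)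
  have An: "\<forall>t>n. A t = 0" using Ai by auto
  have Bn: "\<forall>t>n. B t = 0" using Bi by auto
  note c = comb[OF An Bn Bi(2) ne, folded R_def]
  show "(R, a) \<in> Bas n" unfolding Bas_iff R_def using Ai Bi sa by auto
  show "WD n (R, a) = WD n (A, a) + WD n (B, s) - (int n - 1)"
    unfolding WD_def using c(2,3) by simp
  show "int (pdeg R) = int (pdeg A) + int (pdeg B) - 1" using c(3) by simp
  show "md (R, a) = (\<lambda>t. md (A, a) t + md (B, s) t)"
  proof
    fix t
    have "int (R t) = int (A t) + int (B t) - (if t = s then 1 else 0)"
      unfolding R_def using ne by auto
    moreover have "B a = 0" using Bi sa by auto
    ultimately show "md (R, a) t = md (A, a) t + md (B, s) t" unfolding md_def using sa by auto
  qed
qed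

lemma brb_props:
  assumes b: "b \<in> Bas n" and c: "c \<in> Bas n" and nz: "fst (brb b c) \<noteq> 0"
  shows "snd (brb b c) \<in> Bas n" "WD n (snd (brb b c)) = WD n b + WD n c - (int n - 1)"
    "int (pdeg (fst (snd (brb b c)))) = int (pdeg (fst b)) + int (pdeg (fst c)) - 1"
    "md (snd (brb b c)) = (\<lambda>t. md b t + md c t)"
proof -
  obtain L k where bb: "b = (L, k)" by (cases b)
  obtain T j where cc: "c = (T, j)" by (cases c)
  have "j < k \<or> k < j" using nz unfolding bb cc by (cases "j = k") (auto simp: brb_eq)
  hence "snd (brb b c) \<in> Bas n \<and> WD n (snd (brb b c)) = WD n b + WD n c - (int n - 1) \<and>
    int (pdeg (fst (snd (brb b c)))) = int (pdeg (fst b)) + int (pdeg (fst c)) - 1 \<and>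
    md (snd (brb b c)) = (\<lambda>t. md b t + md c t)"
  proof
    assume jk: "j < k"
    hence Lj: "L j \<ge> 1" using nz unfolding bb cc by (simp add: brb_lt)
    have e: "(\<lambda>i. L i + T i)(j := L j - 1 + T j) = (\<lambda>i. L i + T i)(j := L j + T j - 1)"
      using Lj by auto
    note g = brb_gen[of L k n T j, OF b[unfolded bb] c[unfolded cc] jk]
    show ?thesis unfolding bb cc using g Lj by (simp add: brb_lt jk e)
  next
    assume jk: "k < j"
    hence Tk: "T k \<ge> 1" using nz unfolding bb cc by (simp add: brb_gt)
    have e: "(\<lambda>i. L i + T i)(k := L k + T k - 1) = (\<lambda>i. T i + L i)(k := T k + L k - 1)"
      by (auto simp: add.commute)
    note g = brb_gen[of T j n L k, OF c[unfolded cc] b[unfolded bb] jk]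
    show ?thesis unfolding bb cc using g Tk by (simp add: brb_gt jk e add.commute)
  qed
  thus "snd (brb b c) \<in> Bas n" "WD n (snd (brb b c)) = WD n b + WD n c - (int n - 1)"
    "int (pdeg (fst (snd (brb b c)))) = int (pdeg (fst b)) + int (pdeg (fst c)) - 1"
    "md (snd (brb b c)) = (\<lambda>t. md b t + md c t)" by auto
qed

lemma br_nz: assumes "br y z d \<noteq> 0"
  shows "\<exists>b\<in>supp y. \<exists>c\<in>supp z. snd (brb b c) = d \<and> fst (brb b c) \<noteq> 0"
proof (rule ccontr)
  assume "\<not> ?thesis"
  hence "\<forall>x\<in>supp y \<times> supp z. (case x of (b, c) \<Rightarrow>
      (if snd (brb b c) = d then y b * z c * fst (brb b c) else 0)) = 0" by auto
  hence "br y z d = 0" unfolding br_def by (intro sum.neutral) auto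
  thus False using assms by simp
qed

lemma supp_br: "supp (br y z) \<subseteq> (\<lambda>(b, c). snd (brb b c)) ` {(b, c) \<in> supp y \<times> supp z. fst (brb b c) \<noteq> 0}"
proof
  fix d assume "d \<in> supp (br y z)"
  then obtain b c where "b \<in> supp y" "c \<in> supp z" "snd (brb b c) = d" "fst (brb b c) \<noteq> 0"
    using br_nz unfolding supp_def by blast
  thus "d \<in> (\<lambda>(b, c). snd (brb b c)) ` {(b, c) \<in> supp y \<times> supp z. fst (brb b c) \<noteq> 0}"
    by (intro image_eqI[of _ _ "(b, c)"]) auto
qed

lemma span_br:
  assumes "S \<subseteq> Bas n" "T \<subseteq> Bas n"
    and cl: "\<forall>b\<in>S. \<forall>c\<in>T. fst (brb b c) \<noteq> 0 \<longrightarrow> snd (brb b c) \<in> U \<and> snd (brb b c) \<in> Bas n"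
    and y: "y \<in> span n S" and z: "z \<in> span n T"
  shows "br y z \<in> span n U"
proof -
  have fy: "finite (supp y)" "supp y \<subseteq> S" using y unfolding span_def Lring_def by auto
  have fz: "finite (supp z)" "supp z \<subseteq> T" using z unfolding span_def Lring_def by auto
  have "finite ((\<lambda>(b, c). snd (brb b c)) ` {(b, c) \<in> supp y \<times> supp z. fst (brb b c) \<noteq> 0})"
    using fy fz by (intro finite_imageI) (auto intro: finite_subset[of _ "supp y \<times> supp z"])
  hence f: "finite (supp (br y z))" using supp_br finite_subset by blast
  have "supp (br y z) \<subseteq> U \<inter> Bas n"
    using supp_br[of y z] fy fz cl by fastforce
  thus ?thesis using f unfolding span_def Lring_def by auto
qed

definition dl :: "bas \<Rightarrow> elt" where "dl c = (\<lambda>x. if x = c then 1 else 0)"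

lemma supp_dl: "supp (dl c) = {c}" unfolding supp_def dl_def by auto

lemma dl_span: "c \<in> S \<Longrightarrow> S \<subseteq> Bas n \<Longrightarrow> dl c \<in> span n S"
  unfolding span_def Lring_def by (auto simp: supp_dl)

lemma br_dl:
  assumes y: "y \<in> Lring n" and c: "c \<in> Bas n" and b: "b \<in> supp y" and nz: "fst (brb b c) \<noteq> 0"
  shows "br y (dl c) (snd (brb b c)) = y b * fst (brb b c)"
proof -
  have fy: "finite (supp y)" "supp y \<subseteq> Bas n" using y unfolding Lring_def by auto
  let ?r = "snd (brb b c)"
  let ?f = "\<lambda>x. case x of (b', c') \<Rightarrow> if snd (brb b' c') = ?r then y b' * dl c c' * fst (brb b' c') else 0"
  have "br y (dl c) ?r = sum ?f (supp y \<times> {c})" unfolding br_def supp_dl by simp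
  also have "\<dots> = ?f (b, c) + sum ?f (supp y \<times> {c} - {(b, c)})"
    using fy b by (intro sum.remove) auto
  also have "sum ?f (supp y \<times> {c} - {(b, c)}) = 0"
  proof (intro sum.neutral ballI)
    fix x assume x: "x \<in> supp y \<times> {c} - {(b, c)}"
    then obtain b' where x': "x = (b', c)" "b' \<in> supp y" "b' \<noteq> b" by auto
    have "\<not> (snd (brb b' c) = ?r \<and> fst (brb b' c) \<noteq> 0)"
    proof
      assume h: "snd (brb b' c) = ?r \<and> fst (brb b' c) \<noteq> 0"
      have "md (snd (brb b' c)) = (\<lambda>t. md b' t + md c t)" using brb_props(4)[of b' n c] h x' fy c by auto
      moreover have "md ?r = (\<lambda>t. md b t + md c t)" using brb_props(4)[of b n c] nz b fy c by auto
      ultimately have "md b' = md b" using h by (auto simp: fun_eq_iff)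
      hence "b' = b" using md_inj[of b' n b] x' fy b by auto
      thus False using x' by simp
    qed
    thus "?f x = 0" using x' by auto
  qed
  finally show ?thesis by (simp add: dl_def)
qed

lemma idealizer_span:
  assumes S: "S \<subseteq> Bas n" and T: "T \<subseteq> Bas n"
    and fwd: "\<forall>b\<in>S. \<forall>c\<in>T. fst (brb b c) \<noteq> 0 \<longrightarrow> snd (brb b c) \<in> T"
    and bwd: "\<forall>b\<in>Bas n - S. \<exists>c\<in>T. fst (brb b c) \<noteq> 0 \<and> snd (brb b c) \<notin> T"
  shows "idealizer n (span n T) = span n S"
proof
  show "span n S \<subseteq> idealizer n (span n T)"
  proof
    fix y assume y: "y \<in> span n S"
    have "\<forall>m\<in>span n T. br y m \<in> span n T"
      using span_br[OF S T _ y] fwd S T brb_props(1)[of _ n] by blast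
    thus "y \<in> idealizer n (span n T)" using y unfolding idealizer_def span_def by auto
  qed
next
  show "idealizer n (span n T) \<subseteq> span n S"
  proof
    fix y assume y: "y \<in> idealizer n (span n T)"
    hence yL: "y \<in> Lring n" and yc: "\<forall>m\<in>span n T. br y m \<in> span n T" unfolding idealizer_def by auto
    have "supp y \<subseteq> S"
    proof
      fix b assume b: "b \<in> supp y"
      have bB: "b \<in> Bas n" using b yL unfolding Lring_def by auto
      show "b \<in> S"
      proof (rule ccontr)
        assume "b \<notin> S"
        hence "b \<in> Bas n - S" using bB by simp
        hence "\<exists>c\<in>T. fst (brb b c) \<noteq> 0 \<and> snd (brb b c) \<notin> T" using bwd by blast
        then obtain c where c: "c \<in> T" "fst (brb b c) \<noteq> 0" "snd (brb b c) \<notin> T" by blast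
        have "br y (dl c) \<in> span n T" using yc dl_span[OF c(1) T] by auto
        hence "supp (br y (dl c)) \<subseteq> T" unfolding span_def by auto
        moreover have "br y (dl c) (snd (brb b c)) \<noteq> 0"
          using br_dl[OF yL _ b c(2)] c T b unfolding supp_def by auto
        ultimately show False using c(3) unfolding supp_def by auto
      qed
    qed
    thus "y \<in> span n S" using yL unfolding span_def by auto
  qed
qed

lemma subring_span:
  assumes S: "S \<subseteq> Bas n" and cl: "\<forall>b\<in>S. \<forall>c\<in>S. fst (brb b c) \<noteq> 0 \<longrightarrow> snd (brb b c) \<in> S"
  shows "homogeneous_subring n (span n S)"
proof -
  have "lie_subring n (span n S)"
    unfolding lie_subring_def
  proof (intro conjI ballI)
    show "span n S \<subseteq> Lring n" unfolding span_def by auto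
    show "(\<lambda>_. 0) \<in> span n S" unfolding span_def Lring_def supp_def by auto
    fix x y assume x: "x \<in> span n S" and y: "y \<in> span n S"
    have fx: "finite (supp x)" "supp x \<subseteq> S" "supp x \<subseteq> Bas n" using x unfolding span_def Lring_def by auto
    have fy: "finite (supp y)" "supp y \<subseteq> S" "supp y \<subseteq> Bas n" using y unfolding span_def Lring_def by auto
    have "supp (\<lambda>b. x b + y b) \<subseteq> supp x \<union> supp y" unfolding supp_def by auto
    thus "(\<lambda>b. x b + y b) \<in> span n S" using fx fy unfolding span_def Lring_def
      by (auto intro: finite_subset)
    have "supp (\<lambda>b. - x b) = supp x" unfolding supp_def by auto
    thus "(\<lambda>b. - x b) \<in> span n S" using fx unfolding span_def Lring_def by auto
    show "br x y \<in> span n S" using span_br[OF S S _ x y] cl S brb_props(1)[of _ n] by blast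
  qed
  thus ?thesis unfolding homogeneous_subring_def using S by auto
qed


context fixes n :: nat assumes n3: "n \<ge> 3" begin

abbreviation "q \<equiv> int n - 1"

lemma q2: "q \<ge> 2" using n3 by simp

lemma hh_le: "i \<le> hh n i * q"
proof -
  have "(i - 1) = ((i-1) div q) * q + (i-1) mod q" by (metis div_mult_mod_eq)
  moreover have "(i-1) mod q < q" using q2 by simp
  ultimately show ?thesis unfolding hh_def by (simp add: algebra_simps)
qed

lemma hh_ge: "(hh n i - 1) * q + 1 \<le> i"
proof -
  have "(i - 1) = ((i-1) div q) * q + (i-1) mod q" by (metis div_mult_mod_eq)
  moreover have "(i-1) mod q \<ge> 0" using q2 by simp
  ultimately show ?thesis unfolding hh_def by (simp add: algebra_simps)
qed

lemma hh_mono: "j \<le> i \<Longrightarrow> hh n j \<le> hh n i"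
  unfolding hh_def using q2 by (simp add: zdiv_mono1)

lemma hh_unique: assumes "(h - 1) * q < i" "i \<le> h * q" shows "hh n i = h"
proof -
  have a: "i \<le> hh n i * q" "(hh n i - 1) * q + 1 \<le> i" by (rule hh_le, rule hh_ge)
  have "\<not> hh n i \<ge> h + 1"
  proof
    assume "hh n i \<ge> h + 1"
    hence "h * q \<le> (hh n i - 1) * q" using q2 by (intro mult_right_mono) auto
    thus False using a assms by linarith
  qed
  moreover have "\<not> h \<ge> hh n i + 1"
  proof
    assume "h \<ge> hh n i + 1"
    hence "hh n i * q \<le> (h - 1) * q" using q2 by (intro mult_right_mono) auto
    thus False using a assms by linarith
  qed
  ultimately show ?thesis by linarith
qed

lemma hh_m1: "hh n (-1) = 0" using q2 by (intro hh_unique) auto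
lemma hh_0: "hh n 0 = 0" using q2 by (intro hh_unique) auto
lemma hh_blk: "hh n ((h - 1) * q) = h - 1"
  using q2 by (intro hh_unique) (auto simp: algebra_simps)

lemma hh_nonneg: "-1 \<le> j \<Longrightarrow> 0 \<le> hh n j"
  using hh_mono[of "-1" j] hh_m1 by simp

lemma hh_pos: "1 \<le> i \<Longrightarrow> 1 \<le> hh n i"
proof (rule ccontr)
  assume "1 \<le> i" "\<not> 1 \<le> hh n i"
  hence "hh n i * q \<le> 0" using q2 by (intro mult_nonpos_nonneg) auto
  thus False using hh_le[of i] \<open>1 \<le> i\<close> by linarith
qed

lemma hh_zero_le: "-1 \<le> j \<Longrightarrow> hh n j = 0 \<Longrightarrow> j \<le> 0"
  using hh_le[of j] by simp

lemma PP_small: "0 \<le> i \<Longrightarrow> D \<le> 1 \<Longrightarrow> PP n i W D"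
  unfolding PP_def by (rule exI[of _ 0]) (simp add: hh_0)

lemma PP_m1: "PP n (-1) W D \<longleftrightarrow> D \<le> 0"
proof
  assume "PP n (-1) W D"
  then obtain j where "-1 \<le> j" "j \<le> -1" "hh n j * W + D - 1 \<le> j" unfolding PP_def by auto
  hence "j = -1" by simp
  thus "D \<le> 0" using \<open>hh n j * W + D - 1 \<le> j\<close> hh_m1 by simp
next
  assume "D \<le> 0" thus "PP n (-1) W D" unfolding PP_def by (intro exI[of _ "-1"]) (simp add: hh_m1)
qed

lemma PP_bound: assumes "PP n i W D" "D \<ge> 2" shows "W \<le> q - 1"
proof -
  obtain j where j: "-1 \<le> j" "j \<le> i" "hh n j * W + D - 1 \<le> j" using assms unfolding PP_def by auto
  have h0: "0 \<le> hh n j" using hh_nonneg j by simp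
  have "hh n j \<noteq> 0"
  proof
    assume "hh n j = 0" thus False using hh_zero_le[of j] j assms(2) by simp
  qed
  hence hp: "hh n j > 0" using h0 by simp
  show ?thesis
  proof (rule ccontr)
    assume "\<not> W \<le> q - 1"
    hence "hh n j * q \<le> hh n j * W" using hp by (intro mult_left_mono) auto
    thus False using hh_le[of j] j assms(2) by linarith
  qed
qed

lemma AC_aux:
  assumes j1: "-1 \<le> j1" "j1 \<le> i" "hh n j1 * W1 + D1 - 1 \<le> j1"
    and j2: "-1 \<le> j2" "j2 \<le> j1" "hh n j2 * W2 + D2 - 1 \<le> j2"
    and W2: "W2 \<le> q"
  shows "PP n i (W1 + W2 - q) (D1 + D2 - 1)"
proof -
  define h1 where "h1 = hh n j1"
  define h2 where "h2 = hh n j2"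
  have "h2 \<le> h1" unfolding h1_def h2_def by (rule hh_mono[OF j2(2)])
  hence m: "(h1 - h2) * (W2 - q) \<le> 0" using W2 by (intro mult_nonneg_nonpos) auto
  have l: "j2 \<le> h2 * q" unfolding h2_def by (rule hh_le)
  have e: "h1 * (W1 + W2 - q) = h1 * W1 + h2 * W2 - h2 * q + (h1 - h2) * (W2 - q)"
    by (simp add: algebra_simps)
  have "h1 * (W1 + W2 - q) + (D1 + D2 - 1) - 1 \<le> j1"
    using e m l j1 j2 unfolding h1_def[symmetric] h2_def[symmetric] by linarith
  thus ?thesis unfolding PP_def h1_def using j1 by blast
qed

lemma AC:
  assumes "PP n i W1 D1" "PP n i W2 D2" "W1 \<le> q" "W2 \<le> q"
  shows "PP n i (W1 + W2 - q) (D1 + D2 - 1)"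
proof -
  obtain j1 where j1: "-1 \<le> j1" "j1 \<le> i" "hh n j1 * W1 + D1 - 1 \<le> j1" using assms unfolding PP_def by auto
  obtain j2 where j2: "-1 \<le> j2" "j2 \<le> i" "hh n j2 * W2 + D2 - 1 \<le> j2" using assms unfolding PP_def by auto
  show ?thesis
  proof (cases "j2 \<le> j1")
    case True thus ?thesis using AC_aux[OF j1 j2(1) True j2(3) assms(4)] by simp
  next
    case False
    hence "PP n i (W2 + W1 - q) (D2 + D1 - 1)" using AC_aux[OF j2 j1(1) _ j1(3) assms(3)] by simp
    thus ?thesis by (simp add: algebra_simps)
  qed
qed

lemma AF:
  assumes i0: "0 \<le> i" and b: "PP n i W1 D1" and c: "PP n (i - 1) W2 D2"
    and W1: "0 \<le> W1" "W1 \<le> q" and W2: "W2 \<le> q" and W2q: "W2 = q \<Longrightarrow> D2 \<noteq> 1"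
    and W10: "W1 = 0 \<Longrightarrow> W2 = q \<and> D2 = 0"
  shows "PP n (i - 1) (W1 + W2 - q) (D1 + D2 - 1)"
proof -
  obtain j1 where j1: "-1 \<le> j1" "j1 \<le> i" "hh n j1 * W1 + D1 - 1 \<le> j1" using b unfolding PP_def by auto
  obtain j2 where j2: "-1 \<le> j2" "j2 \<le> i - 1" "hh n j2 * W2 + D2 - 1 \<le> j2" using c unfolding PP_def by auto
  show ?thesis
  proof (cases "j1 \<le> i - 1")
    case True
    hence "PP n (i - 1) W1 D1" unfolding PP_def using j1 by auto
    thus ?thesis using AC c W1 W2 by blast
  next
    case False
    hence ji: "j1 = i" using j1 by simp
    define h where "h = hh n i"
    define h2 where "h2 = hh n j2"
    have hb: "h * W1 + D1 - 1 \<le> i" using j1 ji h_def by simp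
    have l2: "j2 \<le> h2 * q" unfolding h2_def by (rule hh_le)
    have li: "i \<le> h * q" unfolding h_def by (rule hh_le)
    have h2le: "h2 \<le> hh n (i - 1)" unfolding h2_def using j2 by (intro hh_mono) simp
    have him: "hh n (i - 1) \<le> h" unfolding h_def by (intro hh_mono) simp
    show ?thesis
    proof (cases "hh n (i - 1) = h")
      case True
      have key: "h * (W2 - q) + D2 \<le> 0"
      proof (cases "h2 = h")
        case True
        hence "h * W2 + D2 - 1 \<le> i - 1" using j2 h2_def by simp
        thus ?thesis using li by (simp add: algebra_simps)
      next
        case False
        hence hl: "h2 < h" using h2le him by simp
        have a: "h2 * (W2 - q) + D2 \<le> 1" using j2 l2 unfolding h2_def[symmetric] by (simp add: algebra_simps)
        have e: "h * (W2 - q) = h2 * (W2 - q) + (h - h2) * (W2 - q)" by (simp add: algebra_simps)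
        show ?thesis
        proof (cases "W2 = q")
          case True
          hence "D2 \<le> 1" using a by simp
          thus ?thesis using W2q True by simp
        next
          case False
          hence "(h - h2) * (W2 - q) \<le> (h - h2) * (-1)" using W2 hl by (intro mult_left_mono) auto
          hence "(h - h2) * (W2 - q) \<le> -(h - h2)" by simp
          thus ?thesis using a e hl by linarith
        qed
      qed
      have e: "h * (W1 + W2 - q) = h * W1 + h * (W2 - q)" by (simp add: algebra_simps)
      have "hh n (i - 1) * (W1 + W2 - q) + (D1 + D2 - 1) - 1 \<le> i - 1"
        unfolding True using e key hb by linarith
      thus ?thesis unfolding PP_def using i0 by (intro exI[of _ "i - 1"]) auto
    next
      case False
      hence lt: "hh n (i - 1) \<le> h - 1" using him by simp
      have "i - 1 \<le> hh n (i - 1) * q" by (rule hh_le)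
      also have "\<dots> \<le> (h - 1) * q" using lt q2 by (intro mult_right_mono) auto
      finally have u1: "i - 1 \<le> (h - 1) * q" .
      have u2: "(h - 1) * q + 1 \<le> i" unfolding h_def by (rule hh_ge)
      have ieq: "i - 1 = (h - 1) * q" using u1 u2 by simp
      have hi1: "hh n (i - 1) = h - 1" using ieq hh_blk by simp
      have h2l: "h2 \<le> h - 1" using h2le hi1 by simp
      have a: "h2 * (W2 - q) + D2 \<le> 1" using j2 l2 unfolding h2_def[symmetric] by (simp add: algebra_simps)
      have m: "(h - 1 - h2) * (W2 - q) \<le> 0" using h2l W2 by (intro mult_nonneg_nonpos) auto
      have e: "(h - 1) * (W2 - q) = h2 * (W2 - q) + (h - 1 - h2) * (W2 - q)" by (simp add: algebra_simps)
      have key: "(h - 1) * (W2 - q) + D2 \<le> W1"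
      proof (cases "W1 = 0")
        case True thus ?thesis using W10 by simp
      next
        case False thus ?thesis using a m e W1 by linarith
      qed
      have e2: "(h - 1) * (W1 + W2 - q) = h * W1 - W1 + (h - 1) * (W2 - q)" by (simp add: algebra_simps)
      have "hh n (i - 1) * (W1 + W2 - q) + (D1 + D2 - 1) - 1 \<le> i - 1"
        unfolding hi1 using e2 key hb by linarith
      thus ?thesis unfolding PP_def using i0 by (intro exI[of _ "i - 1"]) auto
    qed
  qed
qed

lemma AB:
  assumes i1: "1 \<le> i" and nb: "\<not> PP n i W D"
  shows "\<not> PP n (i - 1) (W - 1) (D + hh n i - 1)"
proof
  assume "PP n (i - 1) (W - 1) (D + hh n i - 1)"
  then obtain j where j: "-1 \<le> j" "j \<le> i - 1" "hh n j * (W - 1) + (D + hh n i - 1) - 1 \<le> j"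
    unfolding PP_def by auto
  have hj: "hh n j \<le> hh n i" using j by (intro hh_mono) simp
  have e: "hh n j * (W - 1) = hh n j * W - hh n j" by (simp add: algebra_simps)
  show False
  proof (cases "hh n j < hh n i")
    case True
    hence "hh n j * W + D - 1 \<le> j" using j e by linarith
    thus False using nb j unfolding PP_def by auto
  next
    case False
    hence eq: "hh n j = hh n i" using hj by simp
    have "hh n (j + 1) = hh n i" using hh_mono[of j "j+1"] hh_mono[of "j+1" i] j eq by simp
    hence "hh n (j + 1) * W + D - 1 \<le> j + 1" using j e eq by simp
    thus False using nb j unfolding PP_def by (metis add.commute add_le_cancel_left le_diff_eq order_trans zle_add1_eq_le zless_add1_eq linorder_not_le)
  qed
qed

lemma AB3: assumes "\<not> PP n i 0 D" shows "\<not> PP n (i - 1) 0 (D - 1)"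
proof
  assume "PP n (i - 1) 0 (D - 1)"
  then obtain j where j: "-1 \<le> j" "j \<le> i - 1" "D - 1 - 1 \<le> j" unfolding PP_def by auto
  hence "-1 \<le> j + 1 \<and> j + 1 \<le> i \<and> hh n (j+1) * 0 + D - 1 \<le> j + 1" by simp
  thus False using assms unfolding PP_def by blast
qed

lemma Wc: assumes "1 \<le> i" shows "PP n (i - 1) (q - 1) (hh n i)"
proof -
  define h where "h = hh n i"
  have h1: "1 \<le> h" unfolding h_def using assms by (rule hh_pos)
  have "(h - 1) * q + 1 \<le> i" unfolding h_def by (rule hh_ge)
  moreover have "0 \<le> (h - 1) * q" using h1 q2 by simp
  moreover have "hh n ((h - 1) * q) * (q - 1) + h - 1 \<le> (h - 1) * q"
  proof -
    have "hh n ((h - 1) * q) = h - 1" by (rule hh_blk)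
    hence "hh n ((h - 1) * q) * (q - 1) = (h-1)*(q-1)" by simp
    moreover have "(h-1)*(q-1) + h - 1 = (h-1)*q" by (simp add: algebra_simps)
    ultimately show ?thesis by linarith
  qed
  ultimately show ?thesis unfolding PP_def h_def[symmetric] by (intro exI[of _ "(h - 1) * q"]) auto
qed

lemma Ncal_iff: "b \<in> Ncal n i \<longleftrightarrow> b \<in> Bas n \<and> PP n i (WD n b) (int (pdeg (fst b)))"
  unfolding Ncal_def PP_def lev_def by auto

lemma Ncal_W: assumes "b \<in> Ncal n i" shows "WD n b \<le> q"
proof (cases "pdeg (fst b) \<ge> 2")
  case True thus ?thesis using PP_bound[of i "WD n b" "int (pdeg (fst b))"] assms by (simp add: Ncal_iff)
next
  case False thus ?thesis using WD_small[of b n] assms by (simp add: Ncal_iff)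
qed

lemma zero_part: "wt (\<lambda>_. 0) = 0" "pdeg (\<lambda>_. 0) = 0"
  unfolding wt_def pdeg_def by auto

lemma R3: assumes b: "b \<in> Bas n" and c: "c \<in> Bas n" and w: "WD n b = 0" and nz: "fst (brb b c) \<noteq> 0"
  shows "WD n c = q \<and> int (pdeg (fst c)) = 0"
proof -
  obtain L k where bb: "b = (L, k)" by (cases b)
  obtain T j where cc: "c = (T, j)" by (cases c)
  have kn: "k = n" and L1: "\<And>t. t \<noteq> 1 \<Longrightarrow> L t = 0" using WD_zero[of L k n] b w bb by auto
  have jn: "1 \<le> j" "j \<le> n" "T 0 = 0" "\<forall>t\<ge>j. T t = 0" using c cc by (auto simp: Bas_iff)
  have "j \<noteq> k" using nz bb cc by (auto simp: brb_eq)
  hence jk: "j < k" using jn kn by simp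
  hence "L j \<noteq> 0" using nz bb cc by (simp add: brb_lt)
  hence "j = 1" by (metis L1)
  hence "T = (\<lambda>_. 0)" using jn by (auto simp: fun_eq_iff) (metis One_nat_def less_one not_le)
  thus ?thesis using cc \<open>j = 1\<close> by (simp add: WD_def zero_part)
qed

lemma key_closed: assumes "b \<in> Ncal n i" "c \<in> Ncal n i" "fst (brb b c) \<noteq> 0"
  shows "snd (brb b c) \<in> Ncal n i"
proof -
  have bc: "b \<in> Bas n" "c \<in> Bas n" using assms by (auto simp: Ncal_iff)
  note p = brb_props[OF bc assms(3)]
  have "PP n i (WD n b + WD n c - q) (int (pdeg (fst b)) + int (pdeg (fst c)) - 1)"
  proof (rule AC)
    show "PP n i (WD n b) (int (pdeg (fst b)))" "PP n i (WD n c) (int (pdeg (fst c)))"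
      using assms by (auto simp: Ncal_iff)
    show "WD n b \<le> q" "WD n c \<le> q" using Ncal_W assms by auto
  qed
  thus ?thesis using p by (simp add: Ncal_iff)
qed

lemma key_fwd: assumes i: "0 \<le> i" and b: "b \<in> Ncal n i" and c: "c \<in> Ncal n (i - 1)" and nz: "fst (brb b c) \<noteq> 0"
  shows "snd (brb b c) \<in> Ncal n (i - 1)"
proof -
  have bc: "b \<in> Bas n" "c \<in> Bas n" using b c by (auto simp: Ncal_iff)
  note p = brb_props[OF bc nz]
  have "PP n (i - 1) (WD n b + WD n c - q) (int (pdeg (fst b)) + int (pdeg (fst c)) - 1)"
  proof (rule AF[OF i])
    show "PP n i (WD n b) (int (pdeg (fst b)))" using b by (simp add: Ncal_iff)
    show "PP n (i - 1) (WD n c) (int (pdeg (fst c)))" using c by (simp add: Ncal_iff)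
    show "0 \<le> WD n b" using WD_nonneg bc by simp
    show "WD n b \<le> q" using Ncal_W b by simp
    show "WD n c \<le> q" using Ncal_W c by simp
    show "WD n c = q \<Longrightarrow> int (pdeg (fst c)) \<noteq> 1" using WD_small(2)[of c n] bc by auto
    show "WD n b = 0 \<Longrightarrow> WD n c = q \<and> int (pdeg (fst c)) = 0" using R3 bc nz by blast
  qed
  thus ?thesis using p by (simp add: Ncal_iff)
qed

lemma pdeg_zero_iff: assumes "(L, k) \<in> Bas n" shows "pdeg L = 0 \<longleftrightarrow> L = (\<lambda>_. 0)"
proof
  assume "pdeg L = 0"
  moreover have z: "\<forall>t>n. L t = 0" using assms by (auto simp: Bas_iff)
  ultimately have "(\<Sum>t\<le>n. L t) = 0" by (simp add: pdeg_sum[of n])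
  hence "\<forall>t\<le>n. L t = 0" by simp
  thus "L = (\<lambda>_. 0)" using z by (auto simp: fun_eq_iff) (metis not_le)
qed (simp add: zero_part)

lemma key_bwd: assumes i: "0 \<le> i" and b: "b \<in> Bas n" and nb: "b \<notin> Ncal n i"
  shows "\<exists>c\<in>Ncal n (i - 1). fst (brb b c) \<noteq> 0 \<and> snd (brb b c) \<notin> Ncal n (i - 1)"
proof -
  obtain L k where bb: "b = (L, k)" by (cases b)
  have bi: "1 \<le> k" "k \<le> n" "L 0 = 0" "\<forall>t\<ge>k. L t = 0" using b bb by (auto simp: Bas_iff)
  define W where "W = WD n b"
  define D where "D = int (pdeg L)"
  have nP: "\<not> PP n i W D" using nb b bb unfolding W_def D_def by (simp add: Ncal_iff)
  have D2: "D \<ge> 2"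
  proof (rule ccontr)
    assume "\<not> 2 \<le> D" hence "D \<le> 1" by simp
    thus False using nP PP_small[OF i] by blast
  qed
  have Lnz: "L \<noteq> (\<lambda>_. 0)" using D2 unfolding D_def by (auto simp: zero_part)
  show ?thesis
  proof (cases "i = 0")
    case True
    obtain j where j: "L j \<noteq> 0" using Lnz by auto
    have jk: "1 \<le> j" "j < k"
    proof -
      show "1 \<le> j"
      proof (rule ccontr)
        assume "\<not> 1 \<le> j" hence "j = 0" by simp
        thus False using j bi by simp
      qed
      show "j < k"
      proof (rule ccontr)
        assume "\<not> j < k" hence "j \<ge> k" by simp
        thus False using j bi by simp
      qed
    qed
    define c where "c = ((\<lambda>_::nat. 0::nat), j)"
    have cB: "c \<in> Bas n" unfolding c_def Bas_iff using jk bi by auto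
    have cN: "c \<in> Ncal n (i - 1)" using cB True PP_m1 by (simp add: Ncal_iff c_def zero_part)
    have nz: "fst (brb b c) \<noteq> 0" using j jk unfolding bb c_def by (simp add: brb_lt)
    note p = brb_props[OF b cB nz]
    have "\<not> PP n (-1) (WD n (snd (brb b c))) (int (pdeg (fst (snd (brb b c)))))"
      using p(3) D2 PP_m1 unfolding D_def bb c_def by (simp add: zero_part)
    hence "snd (brb b c) \<notin> Ncal n (i - 1)" using True by (simp add: Ncal_iff)
    thus ?thesis using cN nz by blast
  next
    case False
    hence i1: "1 \<le> i" using i by simp
    define h where "h = hh n i"
    have h1: "1 \<le> h" unfolding h_def using i1 by (rule hh_pos)
    show ?thesis
    proof (cases "k < n \<or> (\<exists>j. 2 \<le> j \<and> j < k \<and> L j \<noteq> 0)")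
      case True
      obtain j where j: "2 \<le> j" "j \<le> n" "(j < k \<and> L j \<noteq> 0) \<or> j = k + 1"
      proof (cases "k < n")
        case True thus ?thesis using that[of "k + 1"] bi by simp
      next
        case False thus ?thesis using \<open>k < n \<or> _\<close> that bi by auto
      qed
      define a where "a = nat (h - 1)"
      define Th where "Th = (\<lambda>t::nat. (if t = 1 then a else 0) + (if t = j - 1 then 1 else 0))"
      define c where "c = (Th, j)"
      have cB: "c \<in> Bas n" unfolding c_def Bas_iff Th_def using j by auto
      have Thn: "\<forall>t>n. Th t = 0" unfolding Th_def using j by auto
      have "wt Th = (\<Sum>t\<le>n. t * Th t)" using Thn by (rule wt_sum)
      also have "\<dots> = (\<Sum>t\<le>n. (if t = 1 then a else 0) + (if t = j - 1 then j - 1 else 0))"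
        by (intro sum.cong refl) (auto simp: Th_def)
      also have "\<dots> = a + (j - 1)"
      proof -
        have jn1: "j - Suc 0 \<le> n" "Suc 0 \<le> n" using j by auto
        thus ?thesis by (simp add: sum.distrib)
      qed
      finally have wTh: "wt Th = a + (j - 1)" .
      have "pdeg Th = (\<Sum>t\<le>n. Th t)" using Thn by (rule pdeg_sum)
      also have "\<dots> = a + 1" using j by (simp add: sum.distrib Th_def)
      finally have pTh: "pdeg Th = a + 1" .
      have ah: "int a = h - 1" unfolding a_def using h1 by simp
      have Wc': "WD n c = q - 1" unfolding c_def WD_def using wTh pTh j by simp
      have Dc: "int (pdeg (fst c)) = h" unfolding c_def using pTh ah by simp
      have cN: "c \<in> Ncal n (i - 1)" using Wc[OF i1] cB Wc' Dc unfolding h_def by (simp add: Ncal_iff)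
      have nz: "fst (brb b c) \<noteq> 0"
      proof (cases "j < k")
        case True
        hence "L j \<noteq> 0" using j by auto
        thus ?thesis using True unfolding bb c_def by (simp add: brb_lt)
      next
        case False
        hence jk: "j = k + 1" using j by auto
        have "Th k \<ge> 1" unfolding Th_def using jk by simp
        thus ?thesis using jk unfolding bb c_def by (simp add: brb_gt)
      qed
      note p = brb_props[OF b cB nz]
      have "\<not> PP n (i - 1) (W - 1) (D + h - 1)" using AB[OF i1 nP] unfolding h_def .
      moreover have "WD n (snd (brb b c)) = W - 1" using p(2) Wc' unfolding W_def by simp
      moreover have "int (pdeg (fst (snd (brb b c)))) = D + h - 1" using p(3) Dc unfolding D_def bb by simp
      ultimately have "snd (brb b c) \<notin> Ncal n (i - 1)" by (simp add: Ncal_iff)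
      thus ?thesis using cN nz by blast
    next
      case False
      hence kn: "k = n" and Lz: "\<And>j. 2 \<le> j \<Longrightarrow> j < k \<Longrightarrow> L j = 0" using bi by auto
      have L1: "\<And>t. t \<noteq> 1 \<Longrightarrow> L t = 0"
      proof -
        fix t :: nat assume "t \<noteq> 1"
        thus "L t = 0" using Lz[of t] bi by (cases "t = 0"; cases "t < k"; auto)
      qed
      have Ln: "\<forall>t>n. L t = 0" using bi by auto
      have "wt L = (\<Sum>t\<le>n. t * L t)" using Ln by (rule wt_sum)
      also have "\<dots> = (\<Sum>t\<le>n. L t)" using L1 by (intro sum.cong refl) (metis mult_1 mult_zero_right)
      also have "\<dots> = pdeg L" using Ln by (rule pdeg_sum[symmetric])
      finally have "wt L = pdeg L" .
      hence W0: "W = 0" unfolding W_def bb WD_def using kn by simp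
      have L1nz: "L 1 \<noteq> 0"
      proof
        assume "L 1 = 0"
        hence "L = (\<lambda>_. 0)" using L1 by (auto simp: fun_eq_iff) (metis)
        thus False using Lnz by simp
      qed
      define c where "c = ((\<lambda>_::nat. 0::nat), 1::nat)"
      have cB: "c \<in> Bas n" unfolding c_def Bas_iff using n3 by auto
      have cN: "c \<in> Ncal n (i - 1)" using cB PP_small[of "i - 1" 0] i1 by (simp add: Ncal_iff c_def zero_part)
      have k1: "1 < k" using kn n3 by simp
      have nz: "fst (brb b c) \<noteq> 0" using L1nz k1 unfolding bb c_def by (simp add: brb_lt)
      note p = brb_props[OF b cB nz]
      have Wc1: "WD n c = q" unfolding c_def WD_def by (simp add: zero_part)
      have "\<not> PP n (i - 1) 0 (D - 1)" using AB3 nP W0 by simp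
      moreover have "WD n (snd (brb b c)) = 0" using p(2) Wc1 W0 unfolding W_def by simp
      moreover have "int (pdeg (fst (snd (brb b c)))) = D - 1" using p(3) unfolding D_def bb c_def by (simp add: zero_part)
      ultimately have "snd (brb b c) \<notin> Ncal n (i - 1)" by (simp add: Ncal_iff)
      thus ?thesis using cN nz by blast
    qed
  qed
qed

lemma M_sub: "homogeneous_subring n (Mfrak n i)"
  unfolding Mfrak_def
proof (rule subring_span)
  show "Ncal n i \<subseteq> Bas n" by (auto simp: Ncal_iff)
  show "\<forall>b\<in>Ncal n i. \<forall>c\<in>Ncal n i. fst (brb b c) \<noteq> 0 \<longrightarrow> snd (brb b c) \<in> Ncal n i"
    using key_closed by blast
qed

lemma M_id: assumes "0 \<le> i" shows "idealizer n (Mfrak n (i - 1)) = Mfrak n i"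
  unfolding Mfrak_def
proof (rule idealizer_span)
  show "Ncal n i \<subseteq> Bas n" "Ncal n (i - 1) \<subseteq> Bas n" by (auto simp: Ncal_iff)
  show "\<forall>b\<in>Ncal n i. \<forall>c\<in>Ncal n (i - 1). fst (brb b c) \<noteq> 0 \<longrightarrow> snd (brb b c) \<in> Ncal n (i - 1)"
    using key_fwd[OF assms] by blast
  show "\<forall>b\<in>Bas n - Ncal n i. \<exists>c\<in>Ncal n (i - 1). fst (brb b c) \<noteq> 0 \<and> snd (brb b c) \<notin> Ncal n (i - 1)"
    using key_bwd[OF assms] by blast
qed

lemma Ncal_m1: "Ncal n (-1) = {(\<lambda>_. 0, k) | k. 1 \<le> k \<and> k \<le> n}"
proof (intro set_eqI iffI)
  fix b assume b: "b \<in> Ncal n (-1)"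
  obtain L k where bb: "b = (L, k)" by (cases b)
  have "pdeg L = 0" using b bb PP_m1 by (simp add: Ncal_iff)
  hence "L = (\<lambda>_. 0)" using pdeg_zero_iff[of L k] b bb by (simp add: Ncal_iff)
  thus "b \<in> {(\<lambda>_. 0, k) | k. 1 \<le> k \<and> k \<le> n}" using b bb by (auto simp: Ncal_iff Bas_iff)
next
  fix b assume "b \<in> {(\<lambda>_::nat. 0::nat, k) | k. 1 \<le> k \<and> k \<le> n}"
  thus "b \<in> Ncal n (-1)" using PP_m1 by (auto simp: Ncal_iff Bas_iff zero_part)
qed

lemma Nrec_eq: "Nrec n m = Mfrak n (int m - 1)"
proof (induction m)
  case 0 thus ?case by (simp add: Mfrak_def Ncal_m1)
next
  case (Suc m)
  thus ?case using M_id[of "int m"] by simp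
qed

end

theorem theorem3p4:
  fixes n :: nat
  assumes "n \<ge> 3"
  shows "(\<forall>i::int. i \<ge> -1 \<longrightarrow> homogeneous_subring n (Mfrak n i)) \<and>
         (\<forall>i::int. i \<ge> 0 \<longrightarrow>
            Mfrak n i = idealizer n (Mfrak n (i - 1)) \<and>
            idealizer n (Mfrak n (i - 1)) = Nfrak n i)"
proof (intro conjI allI impI)
  fix i :: int
  show "homogeneous_subring n (Mfrak n i)" using M_sub[OF assms] .
next
  fix i :: int assume i: "0 \<le> i"
  show "Mfrak n i = idealizer n (Mfrak n (i - 1))" using M_id[OF assms i] by simp
  have "Nfrak n i = Mfrak n (int (nat (i + 1)) - 1)" unfolding Nfrak_def using Nrec_eq[OF assms] .
  also have "\<dots> = Mfrak n i" using i by simp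
  finally show "idealizer n (Mfrak n (i - 1)) = Nfrak n i" using M_id[OF assms i] by simp
qed

end
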